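(* Let $\preceq$ be a balanced convex preorder on $\Phi_+$, and let $\rho$ be a non-simple real positive root. Then there exists a real minimal pair for $\rho$ (i.e. a minimal pair $(\beta,\gamma)$ for $\rho$ with both $\beta,\gamma$ real roots), unless $\rho$ is of the form $n\delta\pm\alpha_i$ with $n\in\mathbb Z_{>0}$ and $i\in I'$.
   Context: $\mathbf C$ is a Cartan matrix of untwisted affine type on $I=\{0,\dots,l\}$, $0$ the affine vertex, $I'=I\setminus\{0\}$; simple roots $\alpha_i$, null root $\delta$, $\Phi'_+$ positive roots of the finite root system on $I'$, real positive roots $\Phi_+^{\mathrm{re}}=\{\beta+n\delta\mid\beta\in\Phi'_+,n\ge0\}\sqcup\{-\beta+n\delta\mid\beta\in\Phi'_+,n>0\}$, $\Phi_+=\Phi_+^{\mathrm{re}}\sqcup\{n\delta\mid n>0\}$. A convex preorder is a preorder $\preceq$ on $\Phi_+$ such that $\beta\preceq\gamma$ or $\gamma\preceq\beta$; $\beta\preceq\gamma$ and $\beta+\gamma\in\Phi_+$ imply $\beta\preceq\beta+\gamma\preceq\gamma$; $\beta\preceq\gamma\preceq\beta$ iff $\beta,\gamma$ are proportional. $\beta\prec\gamma$ means $\beta\preceq\gamma$ and $\gamma\not\preceq\beta$. It is balanced if $\{\rho\in\Phi_+^{\mathrm{re}}\mid\rho\succ\delta\}=\{\beta+n\delta\mid\beta\in\Phi'_+,n\ge0\}$. A pair $(\beta,\gamma)$ of positive roots is a minimal pair for $\rho\in\Phi_+^{\mathrm{re}}$ if (i) $\beta+\gamma=\rho$ and $\beta\succ\gamma$,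 and (ii) for any other pair $(\beta',\gamma')$ of positive roots satisfying (i), $\beta'\succ\beta$ or $\gamma'\prec\gamma$. *)

theory Defs
  imports "HOL-Analysis.Analysis"
begin

definition refl_vec :: "'a::euclidean_space \<Rightarrow> 'a \<Rightarrow> 'a" where
  "refl_vec \<alpha> x = x - ((2 * (x \<bullet> \<alpha>)) / (\<alpha> \<bullet> \<alpha>)) *\<^sub>R \<alpha>"

definition root_system :: "'a::euclidean_space set \<Rightarrow> bool" where
  "root_system R \<longleftrightarrow> finite R \<and> 0 \<notin> R \<and> span R = UNIV
     \<and> (\<forall>\<alpha>\<in>R. refl_vec \<alpha> ` R = R)
     \<and> (\<forall>\<alpha>\<in>R. \<forall>\<beta>\<in>R. (2 * (\<beta> \<bullet> \<alpha>)) / (\<alpha> \<bullet> \<alpha>) \<in> \<int>)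
     \<and> (\<forall>\<alpha>\<in>R. \<forall>c::real. c *\<^sub>R \<alpha> \<in> R \<longrightarrow> c = 1 \<or> c = -1)"

definition irreducible_rs :: "'a::euclidean_space set \<Rightarrow> bool" where
  "irreducible_rs R \<longleftrightarrow> \<not> (\<exists>R1 R2. R1 \<noteq> {} \<and> R2 \<noteq> {} \<and> R1 \<union> R2 = R \<and> R1 \<inter> R2 = {}
       \<and> (\<forall>a\<in>R1. \<forall>b\<in>R2. a \<bullet> b = 0))"

definition nonneg_int_comb :: "'a::euclidean_space set \<Rightarrow> 'a \<Rightarrow> bool" where
  "nonneg_int_comb S v \<longleftrightarrow> (\<exists>c. (\<forall>a\<in>S. c a \<in> \<int> \<and> c a \<ge> 0) \<and> v = (\<Sum>a\<in>S. c a *\<^sub>R a))"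

definition is_base :: "'a::euclidean_space set \<Rightarrow> 'a set \<Rightarrow> bool" where
  "is_base R S \<longleftrightarrow> S \<subseteq> R \<and> independent S
     \<and> (\<forall>\<beta>\<in>R. nonneg_int_comb S \<beta> \<or> nonneg_int_comb S (- \<beta>))"

definition pos_roots :: "'a::euclidean_space set \<Rightarrow> 'a set \<Rightarrow> 'a set" where
  "pos_roots R S = {\<beta>\<in>R. nonneg_int_comb S \<beta>}"

definition highest_root :: "'a::euclidean_space set \<Rightarrow> 'a set \<Rightarrow> 'a" where
  "highest_root R S = (THE \<theta>. \<theta> \<in> pos_roots R S \<and> (\<forall>a\<in>S. \<theta> + a \<notin> R))"

text \<open>An affine root \<beta> + n\<delta> is encoded as the pair (\<beta>, n); \<delta> = (0, 1).\<close>

definition aff_add :: "'a::euclidean_space \<times> int \<Rightarrow> 'a \<times> int \<Rightarrow> 'a \<times> int" where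
  "aff_add x y = (fst x + fst y, snd x + snd y)"

definition null_root :: "'a::euclidean_space \<times> int" where
  "null_root = (0, 1)"

definition real_pos_roots :: "'a::euclidean_space set \<Rightarrow> 'a set \<Rightarrow> ('a \<times> int) set" where
  "real_pos_roots R S =
     {(\<beta>, n) | \<beta> n. \<beta> \<in> pos_roots R S \<and> n \<ge> 0} \<union> {(- \<beta>, n) | \<beta> n. \<beta> \<in> pos_roots R S \<and> n > 0}"

definition aff_pos_roots :: "'a::euclidean_space set \<Rightarrow> 'a set \<Rightarrow> ('a \<times> int) set" where
  "aff_pos_roots R S = real_pos_roots R S \<union> {(0, n) | n. n > 0}"

text \<open>Simple affine roots: \<alpha>_i (i \<in> I') and \<alpha>_0 = \<delta> - \<theta>.\<close>
definition aff_simple_roots :: "'a::euclidean_space set \<Rightarrow> 'a set \<Rightarrow> ('a \<times> int) set" where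
  "aff_simple_roots R S = {(a, 0) | a. a \<in> S} \<union> {(- highest_root R S, 1)}"

definition proportional :: "'a::euclidean_space \<times> int \<Rightarrow> 'a \<times> int \<Rightarrow> bool" where
  "proportional x y \<longleftrightarrow> (\<exists>c::real. c \<noteq> 0 \<and> fst y = c *\<^sub>R fst x \<and> real_of_int (snd y) = c * real_of_int (snd x))"

definition convex_preorder ::
  "'a::euclidean_space set \<Rightarrow> 'a set \<Rightarrow> ('a \<times> int \<Rightarrow> 'a \<times> int \<Rightarrow> bool) \<Rightarrow> bool" where
  "convex_preorder R S le \<longleftrightarrow>
     (let P = aff_pos_roots R S in
       (\<forall>x\<in>P. le x x)
     \<and> (\<forall>x\<in>P. \<forall>y\<in>P. \<forall>z\<in>P. le x y \<longrightarrow> le y z \<longrightarrow> le x z)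
     \<and> (\<forall>x\<in>P. \<forall>y\<in>P. le x y \<or> le y x)
     \<and> (\<forall>x\<in>P. \<forall>y\<in>P. le x y \<longrightarrow> aff_add x y \<in> P \<longrightarrow> le x (aff_add x y) \<and> le (aff_add x y) y)
     \<and> (\<forall>x\<in>P. \<forall>y\<in>P. (le x y \<and> le y x) \<longleftrightarrow> proportional x y))"

definition strictly :: "('b \<Rightarrow> 'b \<Rightarrow> bool) \<Rightarrow> 'b \<Rightarrow> 'b \<Rightarrow> bool" where
  "strictly le x y \<longleftrightarrow> le x y \<and> \<not> le y x"

definition balanced ::
  "'a::euclidean_space set \<Rightarrow> 'a set \<Rightarrow> ('a \<times> int \<Rightarrow> 'a \<times> int \<Rightarrow> bool) \<Rightarrow> bool" where
  "balanced R S le \<longleftrightarrow>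
     {\<rho> \<in> real_pos_roots R S. strictly le null_root \<rho>} = {(\<beta>, n) | \<beta> n. \<beta> \<in> pos_roots R S \<and> n \<ge> 0}"

definition split_pair ::
  "'a::euclidean_space set \<Rightarrow> 'a set \<Rightarrow> ('a \<times> int \<Rightarrow> 'a \<times> int \<Rightarrow> bool) \<Rightarrow> 'a \<times> int \<Rightarrow> 'a \<times> int \<Rightarrow> 'a \<times> int \<Rightarrow> bool" where
  "split_pair R S le \<rho> \<beta> \<gamma> \<longleftrightarrow> \<beta> \<in> aff_pos_roots R S \<and> \<gamma> \<in> aff_pos_roots R S
     \<and> aff_add \<beta> \<gamma> = \<rho> \<and> strictly le \<gamma> \<beta>"

definition minimal_pair ::
  "'a::euclidean_space set \<Rightarrow> 'a set \<Rightarrow> ('a \<times> int \<Rightarrow> 'a \<times> int \<Rightarrow> bool) \<Rightarrow> 'a \<times> int \<Rightarrow> 'a \<times> int \<Rightarrow> 'a \<times> int \<Rightarrow> bool" where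
  "minimal_pair R S le \<rho> \<beta> \<gamma> \<longleftrightarrow> split_pair R S le \<rho> \<beta> \<gamma>
     \<and> (\<forall>\<beta>' \<gamma>'. split_pair R S le \<rho> \<beta>' \<gamma>' \<and> (\<beta>', \<gamma>') \<noteq> (\<beta>, \<gamma>)
            \<longrightarrow> strictly le \<beta> \<beta>' \<or> strictly le \<gamma>' \<gamma>)"

end

theory Submission
  imports Defs
begin

locale rootsys =
  fixes R S :: "'a::euclidean_space set"
  assumes rs: "root_system R" and base: "is_base R S"
begin

lemma finR: "finite R" and zeroR: "0 \<notin> R" and spanR: "span R = UNIV"
  and reflR: "\<And>\<alpha>. \<alpha>\<in>R \<Longrightarrow> refl_vec \<alpha> ` R = R"
  and intR: "\<And>\<alpha> \<beta>. \<alpha>\<in>R \<Longrightarrow> \<beta>\<in>R \<Longrightarrow> (2 * (\<beta> \<bullet> \<alpha>)) / (\<alpha> \<bullet> \<alpha>) \<in> \<int>"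
  and redR: "\<And>\<alpha> c. \<alpha>\<in>R \<Longrightarrow> c *\<^sub>R \<alpha> \<in> R \<Longrightarrow> c = 1 \<or> c = -1"
  using rs unfolding root_system_def by blast+

lemma SR: "S \<subseteq> R" and indS: "independent S"
  and combS: "\<And>\<beta>. \<beta>\<in>R \<Longrightarrow> nonneg_int_comb S \<beta> \<or> nonneg_int_comb S (- \<beta>)"
  using base unfolding is_base_def by blast+

lemma finS: "finite S" using finR SR finite_subset by blast

lemma refl_mem: "\<alpha>\<in>R \<Longrightarrow> \<beta>\<in>R \<Longrightarrow> refl_vec \<alpha> \<beta> \<in> R"
  using reflR by blast

lemma negR: "\<alpha>\<in>R \<Longrightarrow> - \<alpha> \<in> R"
proof -
  assume a: "\<alpha>\<in>R"
  have "\<alpha> \<bullet> \<alpha> \<noteq> 0" using a zeroR by auto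
  then have "refl_vec \<alpha> \<alpha> = - \<alpha>" unfolding refl_vec_def by (simp add: algebra_simps scaleR_2)
  then show ?thesis using refl_mem[OF a a] by simp
qed

lemma nnic_span: "nonneg_int_comb S v \<Longrightarrow> v \<in> span S"
proof -
  assume "nonneg_int_comb S v"
  then obtain c where c: "v = (\<Sum>a\<in>S. c a *\<^sub>R a)" unfolding nonneg_int_comb_def by blast
  have "\<And>a. a \<in> S \<Longrightarrow> c a *\<^sub>R a \<in> span S" by (simp add: span_base span_scale)
  then show ?thesis unfolding c by (rule span_sum)
qed

lemma spanS: "span S = UNIV"
proof -
  have "R \<subseteq> span S"
  proof
    fix b assume "b \<in> R"
    then show "b \<in> span S" using combS[of b] nnic_span span_neg[of "-b" S] by auto
  qed
  then have "span R \<subseteq> span S" by (simp add: span_minimal)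
  then show ?thesis using spanR by auto
qed

definition cf :: "'a \<Rightarrow> 'a \<Rightarrow> real" where "cf v = representation S v"

lemma inspan: "v \<in> span S" using spanS by auto

lemma cf_add: "cf (u + v) b = cf u b + cf v b"
  unfolding cf_def using representation_add[OF indS inspan inspan] by simp
lemma cf_neg: "cf (- v) b = - cf v b"
  unfolding cf_def using representation_neg[OF indS inspan] by simp
lemma cf_diff: "cf (u - v) b = cf u b - cf v b"
  unfolding cf_def using representation_diff[OF indS inspan inspan] by simp
lemma cf_scale: "cf (r *\<^sub>R v) b = r * cf v b"
  unfolding cf_def using representation_scale[OF indS inspan] by simp
lemma cf_basis: "a \<in> S \<Longrightarrow> cf a b = (if b = a then 1 else 0)"
  unfolding cf_def using representation_basis[OF indS] by simp
lemma cf_out: "b \<notin> S \<Longrightarrow> cf v b = 0"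
  unfolding cf_def using representation_ne_zero by blast
lemma expand: "v = (\<Sum>a\<in>S. cf v a *\<^sub>R a)"
  unfolding cf_def using sum_representation_eq[OF indS inspan finS] by simp
lemma cf_eq: assumes "\<And>a. a \<in> S \<Longrightarrow> cf u a = cf v a" shows "u = v"
proof -
  have "(\<Sum>a\<in>S. cf u a *\<^sub>R a) = (\<Sum>a\<in>S. cf v a *\<^sub>R a)"
    by (rule sum.cong) (auto simp: assms)
  then show ?thesis using expand[of u] expand[of v] by simp
qed
lemma cf_comb: "b \<in> S \<Longrightarrow> cf (\<Sum>a\<in>S. c a *\<^sub>R a) b = c b"
proof -
  assume b: "b \<in> S"
  have "cf (\<Sum>a\<in>S. c a *\<^sub>R a) b = (\<Sum>a\<in>S. cf (c a *\<^sub>R a) b)"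
    unfolding cf_def using representation_sum[OF indS, of S "\<lambda>a. c a *\<^sub>R a"] inspan by simp
  also have "\<dots> = (\<Sum>a\<in>S. c a * (if b = a then 1 else 0))"
    by (intro sum.cong) (auto simp: cf_scale cf_basis)
  also have "\<dots> = c b" using b finS by (simp add: if_distrib cong: if_cong)
  finally show ?thesis .
qed

lemma nnic_iff: "nonneg_int_comb S v \<longleftrightarrow> (\<forall>a\<in>S. cf v a \<in> \<int> \<and> cf v a \<ge> 0)"
proof
  assume "nonneg_int_comb S v"
  then obtain c where c: "\<forall>a\<in>S. c a \<in> \<int> \<and> c a \<ge> 0" "v = (\<Sum>a\<in>S. c a *\<^sub>R a)"
    unfolding nonneg_int_comb_def by blast
  then show "\<forall>a\<in>S. cf v a \<in> \<int> \<and> cf v a \<ge> 0" using cf_comb by auto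
next
  assume "\<forall>a\<in>S. cf v a \<in> \<int> \<and> cf v a \<ge> 0"
  then show "nonneg_int_comb S v" unfolding nonneg_int_comb_def using expand by blast
qed

lemma root_int: "\<beta> \<in> R \<Longrightarrow> cf \<beta> a \<in> \<int>"
proof -
  assume b: "\<beta> \<in> R"
  show ?thesis
  proof (cases "a \<in> S")
    case True
    from combS[OF b] show ?thesis
    proof
      assume "nonneg_int_comb S \<beta>" then show ?thesis using True nnic_iff by blast
    next
      assume "nonneg_int_comb S (- \<beta>)" then have "cf (- \<beta>) a \<in> \<int>" using True nnic_iff by blast
      then have "- cf \<beta> a \<in> \<int>" by (simp add: cf_neg)
      then show ?thesis using Ints_minus by fastforce
    qed
  qed (simp add: cf_out)
qed

lemma root_sign: "\<beta> \<in> R \<Longrightarrow> (\<forall>a\<in>S. cf \<beta> a \<ge> 0) \<or> (\<forall>a\<in>S. cf \<beta> a \<le> 0)"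
proof -
  assume b: "\<beta> \<in> R"
  from combS[OF b] show ?thesis
  proof
    assume "nonneg_int_comb S \<beta>" then show ?thesis using nnic_iff by blast
  next
    assume "nonneg_int_comb S (- \<beta>)" then have "\<forall>a\<in>S. cf (- \<beta>) a \<ge> 0" using nnic_iff by blast
    then show ?thesis by (simp add: cf_neg)
  qed
qed

lemma pos_iff: "\<beta> \<in> pos_roots R S \<longleftrightarrow> \<beta> \<in> R \<and> (\<forall>a\<in>S. cf \<beta> a \<ge> 0)"
  unfolding pos_roots_def using nnic_iff root_int by auto

lemma pos_R: "\<beta> \<in> pos_roots R S \<Longrightarrow> \<beta> \<in> R" by (simp add: pos_iff)

lemma zero_iff: assumes "\<forall>a\<in>S. cf v a = 0" shows "v = 0"
proof -
  have "(\<Sum>a\<in>S. cf v a *\<^sub>R a) = 0" by (rule sum.neutral) (simp add: assms)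
  then show ?thesis using expand[of v] by simp
qed

lemma pos_not_neg: "\<beta> \<in> pos_roots R S \<Longrightarrow> - \<beta> \<notin> pos_roots R S"
proof
  assume a: "\<beta> \<in> pos_roots R S" "- \<beta> \<in> pos_roots R S"
  then have "\<forall>a\<in>S. cf \<beta> a = 0" unfolding pos_iff cf_neg by (meson antisym neg_0_le_iff_le)
  then have "\<beta> = 0" by (rule zero_iff)
  then show False using a zeroR pos_R by auto
qed

lemma root_pos_or_neg: "\<beta> \<in> R \<Longrightarrow> \<beta> \<in> pos_roots R S \<or> - \<beta> \<in> pos_roots R S"
proof -
  assume b: "\<beta> \<in> R"
  from root_sign[OF b] show ?thesis
  proof
    assume "\<forall>a\<in>S. cf \<beta> a \<ge> 0" then show ?thesis using b pos_iff by blast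
  next
    assume "\<forall>a\<in>S. cf \<beta> a \<le> 0" then show ?thesis using negR[OF b] by (simp add: pos_iff cf_neg)
  qed
qed

lemma S_pos: "a \<in> S \<Longrightarrow> a \<in> pos_roots R S"
  using SR by (auto simp: pos_iff cf_basis)

lemma int_ge1: "(x::real) \<in> \<int> \<Longrightarrow> 0 < x \<Longrightarrow> 1 \<le> x"
  by (elim Ints_cases) simp
lemma R_nz: "\<alpha> \<in> R \<Longrightarrow> \<alpha> \<bullet> \<alpha> > 0"
  using zeroR by auto

lemma string:
  assumes a: "\<alpha>\<in>R" and b: "\<beta>\<in>R" and ne1: "\<beta> \<noteq> \<alpha>" and ne2: "\<beta> \<noteq> - \<alpha>" and pos: "\<beta> \<bullet> \<alpha> > 0"
  shows "\<beta> - \<alpha> \<in> R"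
proof -
  have na: "\<alpha> \<bullet> \<alpha> > 0" and nb: "\<beta> \<bullet> \<beta> > 0" using R_nz a b by auto
  define p where "p = 2 * (\<beta> \<bullet> \<alpha>) / (\<alpha> \<bullet> \<alpha>)"
  define q where "q = 2 * (\<alpha> \<bullet> \<beta>) / (\<beta> \<bullet> \<beta>)"
  have pI: "p \<in> \<int>" using intR[OF a b] p_def by simp
  have qI: "q \<in> \<int>" using intR[OF b a] q_def by simp
  have pp: "p > 0" using pos na unfolding p_def by simp
  have ab: "\<alpha> \<bullet> \<beta> = \<beta> \<bullet> \<alpha>" by (rule inner_commute)
  have qp: "q > 0" using pos nb unfolding q_def ab by simp
  have nan: "norm \<alpha> \<noteq> 0" using na by auto
  have ne: "\<bar>\<beta> \<bullet> \<alpha>\<bar> \<noteq> norm \<beta> * norm \<alpha>"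
  proof
    assume "\<bar>\<beta> \<bullet> \<alpha>\<bar> = norm \<beta> * norm \<alpha>"
    then have "norm \<beta> *\<^sub>R \<alpha> = norm \<alpha> *\<^sub>R \<beta> \<or> norm \<beta> *\<^sub>R \<alpha> = - norm \<alpha> *\<^sub>R \<beta>"
      using norm_cauchy_schwarz_abs_eq[of \<beta> \<alpha>] by blast
    then obtain c where c: "\<beta> = c *\<^sub>R \<alpha>"
    proof
      assume h: "norm \<beta> *\<^sub>R \<alpha> = norm \<alpha> *\<^sub>R \<beta>"
      have "\<beta> = (1 / norm \<alpha>) *\<^sub>R (norm \<alpha> *\<^sub>R \<beta>)" using nan by simp
      also have "\<dots> = (norm \<beta> / norm \<alpha>) *\<^sub>R \<alpha>" unfolding h[symmetric] by simp
      finally show ?thesis using that by blast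
    next
      assume h: "norm \<beta> *\<^sub>R \<alpha> = - norm \<alpha> *\<^sub>R \<beta>"
      have "\<beta> = (- 1 / norm \<alpha>) *\<^sub>R (- norm \<alpha> *\<^sub>R \<beta>)" using nan by simp
      also have "\<dots> = (- norm \<beta> / norm \<alpha>) *\<^sub>R \<alpha>" unfolding h[symmetric] by simp
      finally show ?thesis using that by blast
    qed
    then have "c = 1 \<or> c = -1" using redR[OF a] b by simp
    then show False using c ne1 ne2 by auto
  qed
  have lt: "\<bar>\<beta> \<bullet> \<alpha>\<bar> < norm \<beta> * norm \<alpha>" using Cauchy_Schwarz_ineq2[of \<beta> \<alpha>] ne by linarith
  have "(\<beta> \<bullet> \<alpha>)^2 = \<bar>\<beta> \<bullet> \<alpha>\<bar>^2" by simp
  also have "\<dots> < (norm \<beta> * norm \<alpha>)^2" using lt by (intro power_strict_mono) auto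
  also have "\<dots> = (\<beta> \<bullet> \<beta>) * (\<alpha> \<bullet> \<alpha>)" by (simp only: power_mult_distrib power2_norm_eq_inner)
  finally have CS: "(\<beta> \<bullet> \<alpha>)^2 < (\<beta> \<bullet> \<beta>) * (\<alpha> \<bullet> \<alpha>)" .
  have "p * q = (4 * (\<beta> \<bullet> \<alpha>)^2) / ((\<alpha> \<bullet> \<alpha>) * (\<beta> \<bullet> \<beta>))"
    unfolding p_def q_def ab power2_eq_square by simp
  also have "\<dots> < 4"
    using CS na nb by (simp add: pos_divide_less_eq mult.commute)
  finally have pq: "p * q < 4" .
  obtain m where m: "p = of_int m" using pI Ints_cases by blast
  obtain n where n: "q = of_int n" using qI Ints_cases by blast
  have m1: "m \<ge> 1" using pp m by simp
  have n1: "n \<ge> 1" using qp n by simp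
  have "real_of_int (m * n) < 4" using pq m n by simp
  then have mn: "m * n < 4" by linarith
  have "\<not> (m \<ge> 2 \<and> n \<ge> 2)"
  proof
    assume "m \<ge> 2 \<and> n \<ge> 2"
    then have "2 * 2 \<le> m * n" by (intro mult_mono) auto
    then show False using mn by simp
  qed
  then have "m = 1 \<or> n = 1" using m1 n1 by linarith
  then show ?thesis
  proof
    assume "m = 1"
    then have "p = 1" using m by simp
    then have "refl_vec \<alpha> \<beta> = \<beta> - \<alpha>" unfolding refl_vec_def p_def[symmetric] by simp
    then show ?thesis using refl_mem[OF a b] by simp
  next
    assume "n = 1"
    then have "q = 1" using n by simp
    then have "refl_vec \<beta> \<alpha> = \<alpha> - \<beta>" unfolding refl_vec_def q_def[symmetric] by simp
    then have "\<alpha> - \<beta> \<in> R" using refl_mem[OF b a] by simp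
    then have "- (\<alpha> - \<beta>) \<in> R" by (rule negR)
    then show ?thesis by simp
  qed
qed

lemma inner_expand: "v \<bullet> w = (\<Sum>a\<in>S. cf w a * (v \<bullet> a))"
proof -
  have "v \<bullet> w = v \<bullet> (\<Sum>a\<in>S. cf w a *\<^sub>R a)" using expand[of w] by simp
  also have "\<dots> = (\<Sum>a\<in>S. cf w a * (v \<bullet> a))" by (simp add: inner_sum_right)
  finally show ?thesis .
qed

lemma sum_pos_term: assumes "0 < (\<Sum>a\<in>S. f a)" shows "\<exists>a\<in>S. (0::real) < f a"
proof (rule ccontr)
  assume "\<not> (\<exists>a\<in>S. (0::real) < f a)"
  then have "\<And>a. a \<in> S \<Longrightarrow> f a \<le> 0" by (simp add: not_less)
  then have "(\<Sum>a\<in>S. f a) \<le> 0" by (rule sum_nonpos)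
  then show False using assms by simp
qed

lemma self_pos_term: assumes "v \<noteq> 0" shows "\<exists>a\<in>S. 0 < cf v a * (v \<bullet> a)"
proof -
  have "0 < v \<bullet> v" using assms by simp
  then have "0 < (\<Sum>a\<in>S. cf v a * (v \<bullet> a))" using inner_expand[of v v] by simp
  then show ?thesis by (rule sum_pos_term)
qed

lemma sum_zero_nonneg: assumes "\<And>a. a \<in> S \<Longrightarrow> (0::real) \<le> f a" and "(\<Sum>a\<in>S. f a) \<le> 0"
  shows "\<forall>a\<in>S. f a = 0"
proof -
  have "0 \<le> (\<Sum>a\<in>S. f a)" using assms(1) by (rule sum_nonneg)
  then have "(\<Sum>a\<in>S. f a) = 0" using assms(2) by simp
  then show ?thesis using sum_nonneg_eq_0_iff[OF finS assms(1)] by simp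
qed

lemma acute: assumes a: "a \<in> S" and b: "b \<in> S" and ne: "a \<noteq> b" shows "a \<bullet> b \<le> 0"
proof (rule ccontr)
  assume "\<not> a \<bullet> b \<le> 0"
  then have pos: "a \<bullet> b > 0" by simp
  have "a \<noteq> - b"
  proof
    assume "a = - b"
    then have "cf a a = - cf b a" using cf_neg by simp
    then show False using cf_basis a b ne by simp
  qed
  moreover have "a \<in> R" "b \<in> R" using SR a b by auto
  ultimately have "a - b \<in> R" using string[of b a] ne pos by simp
  from root_sign[OF this] have h: "(\<forall>x\<in>S. cf (a - b) x \<ge> 0) \<or> (\<forall>x\<in>S. cf (a - b) x \<le> 0)" .
  have "cf (a - b) a = 1" "cf (a - b) b = -1" using a b ne by (auto simp: cf_diff cf_basis)
  then show False using h a b by (metis le_minus_one_simps(3) not_one_le_zero)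
qed

lemma L1:
  assumes al: "\<alpha> \<in> pos_roots R S" and nS: "\<alpha> \<notin> S"
  shows "\<exists>a\<in>S. \<alpha> - a \<in> pos_roots R S"
proof -
  have aR: "\<alpha> \<in> R" using al pos_R by auto
  then have "\<alpha> \<noteq> 0" using zeroR by auto
  then obtain a where a: "a \<in> S" and t: "0 < cf \<alpha> a * (\<alpha> \<bullet> a)" using self_pos_term by blast
  have c0: "cf \<alpha> a \<ge> 0" using al a pos_iff by auto
  then have ca: "cf \<alpha> a > 0" and ia: "\<alpha> \<bullet> a > 0" using t by (auto simp: zero_less_mult_iff)
  have aR': "a \<in> R" using a SR by auto
  have "\<alpha> \<noteq> - a"
  proof
    assume "\<alpha> = - a"
    then have "\<alpha> \<bullet> a = - (a \<bullet> a)" by simp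
    then show False using ia inner_ge_zero[of a] by linarith
  qed
  moreover have "\<alpha> \<noteq> a" using nS a by auto
  ultimately have dR: "\<alpha> - a \<in> R" using string[OF aR' aR] ia by simp
  show ?thesis
  proof (cases "\<forall>x\<in>S. cf (\<alpha> - a) x \<ge> 0")
    case True
    then show ?thesis using dR a pos_iff by auto
  next
    case False
    then have neg: "\<forall>x\<in>S. cf (\<alpha> - a) x \<le> 0" using root_sign[OF dR] by blast
    have "\<And>x. x \<in> S \<Longrightarrow> cf \<alpha> x = cf a x"
    proof -
      fix x assume x: "x \<in> S"
      have h: "cf \<alpha> x - cf a x \<le> 0" using neg x by (simp add: cf_diff)
      have g: "cf \<alpha> x \<ge> 0" using al x pos_iff by auto
      show "cf \<alpha> x = cf a x"
      proof (cases "x = a")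
        case True
        have "1 \<le> cf \<alpha> a" using int_ge1 root_int[OF aR] ca by blast
        then show ?thesis using h True cf_basis a by simp
      next
        case False
        then show ?thesis using h g cf_basis a by simp
      qed
    qed
    then have "\<alpha> = a" by (rule cf_eq)
    then show ?thesis using nS a by auto
  qed
qed

lemma dom:
  assumes th: "\<theta> \<in> pos_roots R S" and mx: "\<forall>a\<in>S. \<theta> + a \<notin> R" and a: "a \<in> S"
  shows "\<theta> \<bullet> a \<ge> 0"
proof (rule ccontr)
  assume "\<not> \<theta> \<bullet> a \<ge> 0"
  then have n: "\<theta> \<bullet> a < 0" by simp
  have aR: "a \<in> R" using a SR by auto
  have "\<theta> \<noteq> - a" using th pos_not_neg[OF S_pos[OF a]] by auto
  moreover have "\<theta> \<noteq> - (- a)"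
  proof
    assume "\<theta> = - (- a)"
    then have "\<theta> \<bullet> a = a \<bullet> a" by simp
    then show False using n inner_ge_zero[of a] by linarith
  qed
  moreover have "\<theta> \<bullet> (- a) > 0" using n by simp
  ultimately have "\<theta> - (- a) \<in> R" using string[OF negR[OF aR] pos_R[OF th]] by blast
  then show False using mx a by simp
qed

lemma M:
  assumes b: "\<beta> \<in> pos_roots R S" and b': "\<beta>' \<in> R" and ge: "\<forall>a\<in>S. cf \<beta> a \<le> cf \<beta>' a"
    and ne: "\<beta>' \<noteq> \<beta>"
  shows "\<exists>a\<in>S. \<beta> + a \<in> R"
proof -
  have bR: "\<beta> \<in> R" using b pos_R by auto
  have main: "\<And>\<beta>'. \<beta>' \<in> R \<Longrightarrow> (\<forall>a\<in>S. cf \<beta> a \<le> cf \<beta>' a) \<Longrightarrow> \<beta>' \<noteq> \<beta> \<Longrightarrow>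
     (\<Sum>a\<in>S. cf \<beta>' a - cf \<beta> a) \<le> real N \<Longrightarrow> \<exists>a\<in>S. \<beta> + a \<in> R" for N
  proof (induction N)
    case 0
    fix \<beta>' assume h1: "\<forall>a\<in>S. cf \<beta> a \<le> cf \<beta>' a" and h2: "\<beta>' \<noteq> \<beta>"
      and h3: "(\<Sum>a\<in>S. cf \<beta>' a - cf \<beta> a) \<le> real 0"
    have "\<forall>a\<in>S. cf \<beta>' a - cf \<beta> a = 0"
      by (rule sum_zero_nonneg) (use h1 h3 in auto)
    then have "\<beta>' = \<beta>" using cf_eq by simp
    then show "\<exists>a\<in>S. \<beta> + a \<in> R" using h2 by simp
  next
    case (Suc N)
    fix \<beta>'
    assume b'R: "\<beta>' \<in> R" and ge: "\<forall>a\<in>S. cf \<beta> a \<le> cf \<beta>' a" and ne: "\<beta>' \<noteq> \<beta>"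
      and hs: "(\<Sum>a\<in>S. cf \<beta>' a - cf \<beta> a) \<le> real (Suc N)"
    define \<gamma> where "\<gamma> = \<beta>' - \<beta>"
    have "\<gamma> \<noteq> 0" using ne \<gamma>_def by simp
    then obtain a where a: "a \<in> S" and t: "0 < cf \<gamma> a * (\<gamma> \<bullet> a)" using self_pos_term by blast
    have "cf \<gamma> a \<ge> 0" using ge a \<gamma>_def cf_diff by simp
    then have cg: "cf \<gamma> a > 0" and ig: "\<gamma> \<bullet> a > 0" using t by (auto simp: zero_less_mult_iff)
    have aR: "a \<in> R" using a SR by auto
    have b'nn: "\<forall>x\<in>S. cf \<beta>' x \<ge> 0"
    proof
      fix x assume x: "x \<in> S"
      have "cf \<beta> x \<ge> 0" using b x pos_iff by auto
      then show "cf \<beta>' x \<ge> 0" using ge x by (meson order_trans)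
    qed
    have b'pos: "\<beta>' \<in> pos_roots R S" using b'R b'nn pos_iff by blast
    show "\<exists>a\<in>S. \<beta> + a \<in> R"
    proof (cases "\<beta> \<bullet> a < 0")
      case True
      have "\<beta> \<noteq> - a" using b pos_not_neg[OF S_pos[OF a]] by auto
      moreover have "\<beta> \<noteq> - (- a)"
      proof
        assume "\<beta> = - (- a)"
        then have "\<beta> \<bullet> a = a \<bullet> a" by simp
        then show False using True inner_ge_zero[of a] by linarith
      qed
      moreover have "\<beta> \<bullet> (- a) > 0" using True by simp
      ultimately have "\<beta> - (- a) \<in> R" using string[OF negR[OF aR] bR] by blast
      then show ?thesis using a by auto
    next
      case False
      then have ia: "\<beta>' \<bullet> a > 0" using ig \<gamma>_def by (simp add: inner_diff_left)
      have ne1: "\<beta>' \<noteq> a"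
      proof
        assume e: "\<beta>' = a"
        have "\<forall>x\<in>S. cf \<beta> x = 0"
        proof
          fix x assume x: "x \<in> S"
          have g0: "cf \<beta> x \<ge> 0" using b x pos_iff by auto
          show "cf \<beta> x = 0"
          proof (cases "x = a")
            case True
            have "cf \<beta> a < 1" using cg e cf_basis a \<gamma>_def cf_diff by simp
            moreover have "cf \<beta> a \<in> \<int>" using root_int[OF bR] .
            ultimately have "\<not> 0 < cf \<beta> a" using int_ge1 by (meson not_less)
            then show ?thesis using True g0 by simp
          next
            case False
            then have "cf \<beta> x \<le> 0" using ge x e cf_basis a by (metis)
            then show ?thesis using g0 by simp
          qed
        qed
        then have "\<beta> = 0" by (rule zero_iff)
        then show False using bR zeroR by auto
      qed
      have ne2: "\<beta>' \<noteq> - a" using b'pos pos_not_neg[OF S_pos[OF a]] by auto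
      have dR: "\<beta>' - a \<in> R" using string[OF aR b'R ne1 ne2 ia] .
      show ?thesis
      proof (cases "\<beta>' - a = \<beta>")
        case True
        then have "\<beta> + a = \<beta>'" by (simp add: algebra_simps)
        then show ?thesis using a b'R by auto
      next
        case False
        have "cf \<beta>' a - cf \<beta> a \<in> \<int>" using root_int[OF b'R] root_int[OF bR] by (rule Ints_diff)
        moreover have "cf \<beta>' a - cf \<beta> a > 0" using cg \<gamma>_def by (simp add: cf_diff)
        ultimately have d1: "1 \<le> cf \<beta>' a - cf \<beta> a" by (rule int_ge1)
        have ge2: "\<forall>x\<in>S. cf \<beta> x \<le> cf (\<beta>' - a) x"
        proof
          fix x assume x: "x \<in> S"
          show "cf \<beta> x \<le> cf (\<beta>' - a) x"
            using ge x d1 by (cases "x = a") (simp_all add: cf_diff cf_basis a)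
        qed
        have "(\<Sum>x\<in>S. cf (\<beta>' - a) x - cf \<beta> x) = (\<Sum>x\<in>S. (cf \<beta>' x - cf \<beta> x) - (if x = a then 1 else 0))"
          by (intro sum.cong) (simp_all add: cf_diff cf_basis a)
        also have "\<dots> = (\<Sum>x\<in>S. cf \<beta>' x - cf \<beta> x) - 1"
          using a finS by (simp add: sum_subtractf)
        finally have "(\<Sum>x\<in>S. cf (\<beta>' - a) x - cf \<beta> x) \<le> real N" using hs by simp
        then show ?thesis using Suc.IH[OF dR ge2 False] by blast
      qed
    qed
  qed
  show ?thesis
    using main[OF b' ge ne, of "nat \<lceil>\<Sum>a\<in>S. cf \<beta>' a - cf \<beta> a\<rceil>"] real_nat_ceiling_ge by blast
qed


lemma no_cross:
  assumes JK: "J' \<union> K' = S" and orth: "\<forall>x\<in>J'. \<forall>y\<in>K'. x \<bullet> y = 0"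
    and b1: "\<beta>1 \<in> pos_roots R S" and z: "\<forall>b\<in>K'. cf \<beta>1 b = 0" and a: "a \<in> K'"
  shows "\<beta>1 + a \<notin> R"
proof
  assume r: "\<beta>1 + a \<in> R"
  have aS: "a \<in> S" using a JK by auto
  have aR: "a \<in> R" using aS SR by auto
  have "a \<bullet> \<beta>1 = (\<Sum>x\<in>S. cf \<beta>1 x * (a \<bullet> x))" by (rule inner_expand)
  also have "\<dots> = 0"
  proof (rule sum.neutral, rule ballI)
    fix x assume x: "x \<in> S"
    show "cf \<beta>1 x * (a \<bullet> x) = 0"
    proof (cases "x \<in> K'")
      case True then show ?thesis using z by simp
    next
      case False then have "x \<in> J'" using x JK by auto
      then have "x \<bullet> a = 0" using orth a by auto
      then show ?thesis by (simp add: inner_commute)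
    qed
  qed
  finally have o0: "a \<bullet> \<beta>1 = 0" .
  have "(\<beta>1 + a) \<bullet> a = \<beta>1 \<bullet> a + a \<bullet> a" by (rule inner_add_left)
  also have "\<beta>1 \<bullet> a = 0" using o0 by (simp only: inner_commute)
  finally have o: "(\<beta>1 + a) \<bullet> a = a \<bullet> a" by simp
  have "a \<bullet> a \<noteq> 0" using R_nz[OF aR] by simp
  then have "refl_vec a (\<beta>1 + a) = \<beta>1 - a" unfolding refl_vec_def o by (simp add: algebra_simps scaleR_2)
  then have dR: "\<beta>1 - a \<in> R" using refl_mem[OF aR r] by simp
  have "\<beta>1 \<noteq> 0" using b1 pos_R zeroR by auto
  then obtain x where x: "x \<in> S" "cf \<beta>1 x \<noteq> 0" using zero_iff by blast
  then have xK: "x \<notin> K'" using z by auto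
  have "cf \<beta>1 x \<ge> 0" using b1 x pos_iff by auto
  moreover have "x \<noteq> a" using xK a by auto
  ultimately have p1: "cf (\<beta>1 - a) x > 0" using x aS by (simp add: cf_diff cf_basis)
  have "cf \<beta>1 a = 0" using z a by simp
  then have p2: "cf (\<beta>1 - a) a < 0" using aS by (simp add: cf_diff cf_basis)
  from root_sign[OF dR] show False
  proof
    assume "\<forall>x\<in>S. 0 \<le> cf (\<beta>1 - a) x"
    then have "0 \<le> cf (\<beta>1 - a) a" using aS by blast
    then show False using p2 by simp
  next
    assume "\<forall>x\<in>S. cf (\<beta>1 - a) x \<le> 0"
    then have "cf (\<beta>1 - a) x \<le> 0" using x(1) by blast
    then show False using p1 by simp
  qed
qed

lemma support:
  assumes JK: "J \<union> K = S" "J \<inter> K = {}" and orth: "\<forall>x\<in>J. \<forall>y\<in>K. x \<bullet> y = 0"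
    and b: "\<beta> \<in> pos_roots R S"
  shows "(\<forall>y\<in>K. cf \<beta> y = 0) \<or> (\<forall>y\<in>J. cf \<beta> y = 0)"
proof -
  have orth': "\<forall>x\<in>K. \<forall>y\<in>J. x \<bullet> y = 0"
  proof (intro ballI)
    fix x y assume "x \<in> K" "y \<in> J"
    then have "y \<bullet> x = 0" using orth by blast
    then show "x \<bullet> y = 0" by (simp only: inner_commute)
  qed
  have JK': "K \<union> J = S" using JK by auto
  have main: "\<And>\<beta>. \<beta> \<in> pos_roots R S \<Longrightarrow> (\<Sum>a\<in>S. cf \<beta> a) \<le> real N \<Longrightarrow>
     (\<forall>y\<in>K. cf \<beta> y = 0) \<or> (\<forall>y\<in>J. cf \<beta> y = 0)" for N
  proof (induction N)
    case 0
    fix \<beta> assume b: "\<beta> \<in> pos_roots R S" and s: "(\<Sum>a\<in>S. cf \<beta> a) \<le> real 0"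
    have nn: "\<forall>a\<in>S. cf \<beta> a \<ge> 0" using b pos_iff by auto
    have "\<forall>a\<in>S. cf \<beta> a = 0" by (rule sum_zero_nonneg) (use nn s in auto)
    then have "\<beta> = 0" by (rule zero_iff)
    then show "(\<forall>y\<in>K. cf \<beta> y = 0) \<or> (\<forall>y\<in>J. cf \<beta> y = 0)" using b pos_R zeroR by auto
  next
    case (Suc N)
    fix \<beta> assume b: "\<beta> \<in> pos_roots R S" and s: "(\<Sum>a\<in>S. cf \<beta> a) \<le> real (Suc N)"
    show "(\<forall>y\<in>K. cf \<beta> y = 0) \<or> (\<forall>y\<in>J. cf \<beta> y = 0)"
    proof (cases "\<beta> \<in> S")
      case True
      show ?thesis
      proof (cases "\<beta> \<in> J")
        case bJ: True
        have "\<forall>y\<in>K. cf \<beta> y = 0"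
        proof
          fix y assume "y \<in> K"
          then have "y \<noteq> \<beta>" using bJ JK(2) by auto
          then show "cf \<beta> y = 0" using True by (simp add: cf_basis)
        qed
        then show ?thesis by blast
      next
        case False
        then have bK: "\<beta> \<in> K" using True JK(1) by auto
        have "\<forall>y\<in>J. cf \<beta> y = 0"
        proof
          fix y assume "y \<in> J"
          then have "y \<noteq> \<beta>" using bK JK(2) by auto
          then show "cf \<beta> y = 0" using True by (simp add: cf_basis)
        qed
        then show ?thesis by blast
      qed
    next
      case False
      then obtain a where a: "a \<in> S" and b1: "\<beta> - a \<in> pos_roots R S" using L1 b by blast
      have "(\<Sum>x\<in>S. cf (\<beta> - a) x) = (\<Sum>x\<in>S. cf \<beta> x - (if x = a then 1 else 0))"
        by (intro sum.cong) (auto simp: cf_diff cf_basis a)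
      also have "\<dots> = (\<Sum>x\<in>S. cf \<beta> x) - 1" using a finS by (simp add: sum_subtractf)
      finally have "(\<Sum>x\<in>S. cf (\<beta> - a) x) \<le> real N" using s by simp
      from Suc.IH[OF b1 this] have ih: "(\<forall>y\<in>K. cf (\<beta> - a) y = 0) \<or> (\<forall>y\<in>J. cf (\<beta> - a) y = 0)" .
      have bR: "\<beta> \<in> R" using b pos_R by auto
      have eq: "\<beta> - a + a = \<beta>" by simp
      from ih show ?thesis
      proof
        assume zK: "\<forall>y\<in>K. cf (\<beta> - a) y = 0"
        show ?thesis
        proof (cases "a \<in> K")
          case True
          then show ?thesis using no_cross[OF JK(1) orth b1 zK True] eq bR by simp
        next
          case False
          have "\<forall>y\<in>K. cf \<beta> y = 0"
          proof
            fix y assume y: "y \<in> K"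
            then have "y \<noteq> a" using False by auto
            then show "cf \<beta> y = 0" using zK y a by (simp add: cf_diff cf_basis)
          qed
          then show ?thesis by blast
        qed
      next
        assume zJ: "\<forall>y\<in>J. cf (\<beta> - a) y = 0"
        show ?thesis
        proof (cases "a \<in> J")
          case True
          then show ?thesis using no_cross[OF JK' orth' b1 zJ True] eq bR by simp
        next
          case False
          have "\<forall>y\<in>J. cf \<beta> y = 0"
          proof
            fix y assume y: "y \<in> J"
            then have "y \<noteq> a" using False by auto
            then show "cf \<beta> y = 0" using zJ y a by (simp add: cf_diff cf_basis)
          qed
          then show ?thesis by blast
        qed
      qed
    qed
  qed
  show ?thesis using main[OF b, of "nat \<lceil>\<Sum>a\<in>S. cf \<beta> a\<rceil>"] real_nat_ceiling_ge by blast
qed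

lemma all_cf_pos:
  assumes irr: "irreducible_rs R" and th: "\<theta> \<in> pos_roots R S" and mx: "\<forall>a\<in>S. \<theta> + a \<notin> R"
  shows "\<forall>a\<in>S. cf \<theta> a > 0"
proof (rule ccontr)
  assume "\<not> (\<forall>a\<in>S. cf \<theta> a > 0)"
  define J where "J = {a\<in>S. cf \<theta> a > 0}"
  define K where "K = {a\<in>S. \<not> cf \<theta> a > 0}"
  have JK: "J \<union> K = S" "J \<inter> K = {}" unfolding J_def K_def by auto
  have Kne: "K \<noteq> {}" using \<open>\<not> (\<forall>a\<in>S. cf \<theta> a > 0)\<close> K_def by auto
  have nn: "\<forall>a\<in>S. cf \<theta> a \<ge> 0" using th pos_iff by auto
  have K0: "\<forall>b\<in>K. cf \<theta> b = 0"
  proof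
    fix b assume "b \<in> K"
    then have "b \<in> S" "\<not> cf \<theta> b > 0" by (auto simp: K_def)
    moreover have "cf \<theta> b \<ge> 0" using nn \<open>b \<in> S\<close> by blast
    ultimately show "cf \<theta> b = 0" by linarith
  qed
  have thR: "\<theta> \<in> R" using th pos_R by auto
  have orth: "\<forall>x\<in>J. \<forall>y\<in>K. x \<bullet> y = 0"
  proof (intro ballI)
    fix x y assume x: "x \<in> J" and y: "y \<in> K"
    have yS: "y \<in> S" using y K_def by auto
    have xS: "x \<in> S" using x J_def by auto
    have terms: "\<forall>z\<in>S. cf \<theta> z * (y \<bullet> z) \<le> 0"
    proof
      fix z assume z: "z \<in> S"
      show "cf \<theta> z * (y \<bullet> z) \<le> 0"
      proof (cases "z = y")
        case True then show ?thesis using K0 y by simp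
      next
        case False
        then have "y \<bullet> z \<le> 0" using acute[OF yS z] by simp
        then show ?thesis using nn z by (simp add: mult_nonneg_nonpos)
      qed
    qed
    have "y \<bullet> \<theta> = (\<Sum>z\<in>S. cf \<theta> z * (y \<bullet> z))" by (rule inner_expand)
    moreover have "y \<bullet> \<theta> \<ge> 0" using dom[OF th mx yS] by (simp add: inner_commute)
    ultimately have "(\<Sum>z\<in>S. - (cf \<theta> z * (y \<bullet> z))) \<le> 0"
      by (simp add: sum_negf)
    then have "\<forall>z\<in>S. - (cf \<theta> z * (y \<bullet> z)) = 0"
      by (intro sum_zero_nonneg) (use terms in auto)
    then have "cf \<theta> x * (y \<bullet> x) = 0" using xS by auto
    moreover have "cf \<theta> x > 0" using x J_def by auto
    ultimately show "x \<bullet> y = 0" by (simp add: inner_commute)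
  qed
  define R1 where "R1 = {\<beta>\<in>R. \<forall>b\<in>K. cf \<beta> b = 0}"
  define R2 where "R2 = R - R1"
  have "\<theta> \<noteq> 0" using thR zeroR by auto
  then obtain a where a: "a \<in> S" "cf \<theta> a \<noteq> 0" using zero_iff by blast
  moreover have "cf \<theta> a \<ge> 0" using nn a(1) by blast
  ultimately have "cf \<theta> a > 0" by linarith
  then have aJ: "a \<in> J" using a(1) J_def by blast
  have "\<forall>b\<in>K. cf a b = 0"
  proof
    fix b assume "b \<in> K"
    then have "b \<noteq> a" using aJ JK(2) by auto
    then show "cf a b = 0" using a(1) by (simp add: cf_basis)
  qed
  then have "a \<in> R1" using a(1) SR unfolding R1_def by blast
  then have R1ne: "R1 \<noteq> {}" by auto
  obtain b where bK: "b \<in> K" using Kne by auto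
  then have bS: "b \<in> S" using K_def by auto
  have "cf b b \<noteq> 0" using bS by (simp add: cf_basis)
  then have "b \<in> R2" using bK bS SR unfolding R2_def R1_def by blast
  then have R2ne: "R2 \<noteq> {}" by auto
  have sup2: "\<forall>y\<in>J. cf \<gamma> y = 0" if g: "\<gamma> \<in> R2" for \<gamma>
  proof -
    have gR: "\<gamma> \<in> R" and nK: "\<not> (\<forall>y\<in>K. cf \<gamma> y = 0)" using g unfolding R2_def R1_def by auto
    from root_pos_or_neg[OF gR] show ?thesis
    proof
      assume "\<gamma> \<in> pos_roots R S"
      then show ?thesis using support[OF JK orth] nK by blast
    next
      assume "- \<gamma> \<in> pos_roots R S"
      then have "(\<forall>y\<in>K. cf (- \<gamma>) y = 0) \<or> (\<forall>y\<in>J. cf (- \<gamma>) y = 0)" using support[OF JK orth] by blast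
      then show ?thesis using nK by (simp add: cf_neg)
    qed
  qed
  have orthR: "\<forall>x\<in>R1. \<forall>y\<in>R2. x \<bullet> y = 0"
  proof (intro ballI)
    fix x y assume x: "x \<in> R1" and y: "y \<in> R2"
    have xK: "\<forall>b\<in>K. cf x b = 0" using x R1_def by auto
    have yJ: "\<forall>b\<in>J. cf y b = 0" using sup2[OF y] .
    have "x \<bullet> y = (\<Sum>c\<in>S. cf y c * (x \<bullet> c))" by (rule inner_expand)
    also have "\<dots> = 0"
    proof (rule sum.neutral, rule ballI)
      fix c assume c: "c \<in> S"
      show "cf y c * (x \<bullet> c) = 0"
      proof (cases "c \<in> J")
        case True then show ?thesis using yJ by simp
      next
        case False
        then have cK: "c \<in> K" using c JK by auto
        have "c \<bullet> x = (\<Sum>d\<in>S. cf x d * (c \<bullet> d))" by (rule inner_expand)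
        also have "\<dots> = 0"
        proof (rule sum.neutral, rule ballI)
          fix d assume d: "d \<in> S"
          show "cf x d * (c \<bullet> d) = 0"
          proof (cases "d \<in> K")
            case True then show ?thesis using xK by simp
          next
            case False then have "d \<in> J" using d JK by auto
            then have "d \<bullet> c = 0" using orth cK by auto
            then show ?thesis by (simp add: inner_commute)
          qed
        qed
        finally show ?thesis by (simp add: inner_commute)
      qed
    qed
    finally show "x \<bullet> y = 0" .
  qed
  have "R1 \<union> R2 = R" "R1 \<inter> R2 = {}" unfolding R1_def R2_def by auto
  then have "\<exists>R1 R2. R1 \<noteq> {} \<and> R2 \<noteq> {} \<and> R1 \<union> R2 = R \<and> R1 \<inter> R2 = {}
       \<and> (\<forall>a\<in>R1. \<forall>b\<in>R2. a \<bullet> b = 0)" using R1ne R2ne orthR by blast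
  then show False using irr unfolding irreducible_rs_def by blast
qed

lemma uniq:
  assumes irr: "irreducible_rs R" and th: "\<theta> \<in> pos_roots R S" and mx: "\<forall>a\<in>S. \<theta> + a \<notin> R"
    and th': "\<theta>' \<in> pos_roots R S" and mx': "\<forall>a\<in>S. \<theta>' + a \<notin> R"
  shows "\<theta>' = \<theta>"
proof (rule ccontr)
  assume ne: "\<theta>' \<noteq> \<theta>"
  have thR: "\<theta> \<in> R" and th'R: "\<theta>' \<in> R" using th th' pos_R by auto
  have cp: "\<forall>a\<in>S. cf \<theta>' a > 0" using all_cf_pos[OF irr th' mx'] .
  have "\<theta> \<noteq> 0" using thR zeroR by auto
  then obtain a where a: "a \<in> S" and t: "0 < cf \<theta> a * (\<theta> \<bullet> a)" using self_pos_term by blast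
  have "cf \<theta> a \<ge> 0" using th a pos_iff by auto
  then have ta: "\<theta> \<bullet> a > 0" using t by (auto simp: zero_less_mult_iff)
  have "\<theta> \<bullet> \<theta>' = (\<Sum>x\<in>S. cf \<theta>' x * (\<theta> \<bullet> x))" by (rule inner_expand)
  moreover have "cf \<theta>' a * (\<theta> \<bullet> a) \<le> (\<Sum>x\<in>S. cf \<theta>' x * (\<theta> \<bullet> x))"
  proof (rule member_le_sum[OF a _ finS])
    fix x assume "x \<in> S - {a}"
    then have x: "x \<in> S" by simp
    have "cf \<theta>' x > 0" using cp x by blast
    moreover have "\<theta> \<bullet> x \<ge> 0" using dom[OF th mx x] .
    ultimately show "0 \<le> cf \<theta>' x * (\<theta> \<bullet> x)" by simp
  qed
  moreover have "cf \<theta>' a * (\<theta> \<bullet> a) > 0" using cp a ta by simp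
  ultimately have pos: "\<theta> \<bullet> \<theta>' > 0" by linarith
  have n2: "\<theta> \<noteq> - \<theta>'" using pos_not_neg[OF th'] th by blast
  have n1: "\<theta> \<noteq> \<theta>'" using ne by simp
  have pos': "\<theta> \<bullet> \<theta>' > 0" using pos by simp
  have dR: "\<theta> - \<theta>' \<in> R" by (rule string[OF th'R thR n1 n2 pos'])
  from root_pos_or_neg[OF dR] show False
  proof
    assume "\<theta> - \<theta>' \<in> pos_roots R S"
    then have "\<forall>x\<in>S. cf \<theta>' x \<le> cf \<theta> x" using pos_iff by (auto simp: cf_diff)
    then show False using M[OF th' thR _ ne[symmetric]] mx' by blast
  next
    assume "- (\<theta> - \<theta>') \<in> pos_roots R S"
    then have "\<forall>x\<in>S. cf \<theta> x \<le> cf \<theta>' x" using pos_iff by (auto simp: cf_diff cf_neg)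
    then show False using M[OF th th'R _ ne] mx by blast
  qed
qed

lemma highest:
  assumes irr: "irreducible_rs R" and al: "\<alpha> \<in> pos_roots R S" and mx: "\<forall>a\<in>S. \<alpha> + a \<notin> R"
  shows "highest_root R S = \<alpha>"
  unfolding highest_root_def
proof (rule the_equality)
  show "\<alpha> \<in> pos_roots R S \<and> (\<forall>a\<in>S. \<alpha> + a \<notin> R)" using al mx by blast
  fix \<theta> assume "\<theta> \<in> pos_roots R S \<and> (\<forall>a\<in>S. \<theta> + a \<notin> R)"
  then show "\<theta> = \<alpha>" using uniq[OF irr al mx] by blast
qed


end

lemma finite_max:
  assumes "finite A" "A \<noteq> {}" "\<forall>x\<in>A. \<forall>y\<in>A. r x y \<or> r y x"
    "\<forall>x\<in>A. \<forall>y\<in>A. \<forall>z\<in>A. r x y \<longrightarrow> r y z \<longrightarrow> r x z"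
  shows "\<exists>m\<in>A. \<forall>x\<in>A. r x m"
  using assms
proof (induction A rule: finite_ne_induct)
  case (singleton x)
  then show ?case by blast
next
  case (insert x A)
  then obtain m where m: "m \<in> A" "\<forall>y\<in>A. r y m" by blast
  show ?case
  proof (cases "r x m")
    case True
    then show ?thesis using m by blast
  next
    case False
    then have "r m x" using insert.prems(1) m(1) by blast
    then have "\<forall>y\<in>A. r y x" using m insert.prems(2) by blast
    moreover have "r x x" using insert.prems(1) by blast
    ultimately show ?thesis by blast
  qed
qed

locale aff = rootsys R S for R S :: "'a::euclidean_space set" +
  fixes le :: "'a \<times> int \<Rightarrow> 'a \<times> int \<Rightarrow> bool"
  assumes cp: "convex_preorder R S le" and bal: "balanced R S le"
begin

abbreviation "PP \<equiv> aff_pos_roots R S"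
abbreviation "RP \<equiv> real_pos_roots R S"
abbreviation "sp \<equiv> split_pair R S le"
abbreviation "lt \<equiv> strictly le"

lemma le_refl: "x \<in> PP \<Longrightarrow> le x x"
  and le_trans: "x \<in> PP \<Longrightarrow> y \<in> PP \<Longrightarrow> z \<in> PP \<Longrightarrow> le x y \<Longrightarrow> le y z \<Longrightarrow> le x z"
  and le_total: "x \<in> PP \<Longrightarrow> y \<in> PP \<Longrightarrow> le x y \<or> le y x"
  and le_prop: "x \<in> PP \<Longrightarrow> y \<in> PP \<Longrightarrow> (le x y \<and> le y x) \<longleftrightarrow> proportional x y"
  using cp unfolding convex_preorder_def Let_def by blast+

lemma rp1: "\<beta> \<in> pos_roots R S \<Longrightarrow> n \<ge> 0 \<Longrightarrow> (\<beta>, n) \<in> RP"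
  unfolding real_pos_roots_def by blast
lemma rp2: "\<beta> \<in> pos_roots R S \<Longrightarrow> n > 0 \<Longrightarrow> (- \<beta>, n) \<in> RP"
  unfolding real_pos_roots_def by blast
lemma RP_PP: "x \<in> RP \<Longrightarrow> x \<in> PP"
  unfolding aff_pos_roots_def by blast
lemma imag_PP: "n > 0 \<Longrightarrow> (0, n) \<in> PP"
  unfolding aff_pos_roots_def by blast
lemma delta_PP: "null_root \<in> PP"
  unfolding null_root_def using imag_PP by simp

lemma PP_cases:
  assumes "x \<in> PP"
  obtains (A) \<beta> n where "\<beta> \<in> pos_roots R S" "n \<ge> 0" "x = (\<beta>, n)"
    | (B) \<beta> n where "\<beta> \<in> pos_roots R S" "n > 0" "x = (- \<beta>, n)"
    | (I) n where "n > 0" "x = (0, n)"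
  using assms unfolding aff_pos_roots_def real_pos_roots_def by blast

lemma RP_cases:
  assumes "x \<in> RP"
  obtains (A) \<beta> n where "\<beta> \<in> pos_roots R S" "n \<ge> 0" "x = (\<beta>, n)"
    | (B) \<beta> n where "\<beta> \<in> pos_roots R S" "n > 0" "x = (- \<beta>, n)"
  using assms unfolding real_pos_roots_def by blast

lemma RP_fst: assumes "x \<in> RP" shows "fst x \<in> R"
  using assms by (cases rule: RP_cases) (auto intro: pos_R negR)

lemma RP_nz: assumes "x \<in> RP" shows "fst x \<noteq> 0"
  using RP_fst[OF assms] zeroR by auto

lemma PP_snd: assumes "x \<in> PP" shows "snd x \<ge> 0"
  using assms by (cases rule: PP_cases) auto

lemma PP_nz: assumes "x \<in> PP" shows "x \<noteq> (0, 0)"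
proof
  assume e: "x = (0, 0)"
  from assms show False
  proof (cases rule: PP_cases)
    case (A \<beta> n) then show False using e pos_R zeroR by auto
  next
    case (B \<beta> n) then show False using e by auto
  next
    case (I n) then show False using e by auto
  qed
qed

lemma PP_real_or_imag: assumes "x \<in> PP" shows "x \<in> RP \<or> (\<exists>n>0. x = (0, n))"
  using assms unfolding aff_pos_roots_def by blast

lemma imag_equiv: assumes "n > 0" shows "le (0, n) null_root \<and> le null_root (0, n)"
proof -
  have "proportional (0, n) null_root"
    unfolding proportional_def null_root_def using assms
    by (intro exI[of _ "1 / real_of_int n"]) simp
  then show ?thesis using le_prop[OF imag_PP[OF assms] delta_PP] by blast
qed

lemma not_prop_real_delta:
  assumes "x \<in> RP" shows "\<not> proportional x null_root" "\<not> proportional null_root x"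
proof -
  have nz: "fst x \<noteq> 0" using RP_nz[OF assms] .
  show "\<not> proportional x null_root"
  proof
    assume "proportional x null_root"
    then obtain c where "c \<noteq> 0" "fst (null_root::'a\<times>int) = c *\<^sub>R fst x" unfolding proportional_def by blast
    then show False using nz unfolding null_root_def by simp
  qed
  show "\<not> proportional null_root x"
  proof
    assume "proportional null_root x"
    then obtain c where "fst x = c *\<^sub>R fst (null_root::'a\<times>int)" unfolding proportional_def by blast
    then show False using nz unfolding null_root_def by simp
  qed
qed

lemma above: assumes "\<beta> \<in> pos_roots R S" "n \<ge> 0" shows "lt null_root (\<beta>, n)"
proof -
  have "(\<beta>, n) \<in> {(\<beta>, n) | \<beta> n. \<beta> \<in> pos_roots R S \<and> n \<ge> 0}" using assms by blast
  then have "(\<beta>, n) \<in> {\<rho> \<in> RP. strictly le null_root \<rho>}" using bal unfolding balanced_def by simp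
  then show ?thesis by simp
qed

lemma below: assumes b: "\<beta> \<in> pos_roots R S" and n: "n > 0" shows "lt (- \<beta>, n) null_root"
proof -
  have x: "(- \<beta>, n) \<in> RP" using rp2[OF b n] .
  have "(- \<beta>, n) \<notin> {(\<beta>, n) | \<beta> n. \<beta> \<in> pos_roots R S \<and> n \<ge> 0}"
    using pos_not_neg[OF b] by auto
  then have ns: "\<not> lt null_root (- \<beta>, n)" using bal x unfolding balanced_def by blast
  have np: "\<not> proportional null_root (- \<beta>, n)" using not_prop_real_delta(2)[OF x] .
  have xP: "(- \<beta>, n) \<in> PP" using RP_PP[OF x] .
  have "\<not> le null_root (- \<beta>, n)"
  proof
    assume h: "le null_root (- \<beta>, n)"
    then have "le (- \<beta>, n) null_root" using ns unfolding strictly_def by blast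
    then show False using h np le_prop[OF delta_PP xP] by blast
  qed
  moreover then have "le (- \<beta>, n) null_root" using le_total[OF delta_PP xP] by blast
  ultimately show ?thesis unfolding strictly_def by blast
qed

lemma st_trans1: "x \<in> PP \<Longrightarrow> y \<in> PP \<Longrightarrow> z \<in> PP \<Longrightarrow> lt x y \<Longrightarrow> le y z \<Longrightarrow> lt x z"
  unfolding strictly_def by (meson le_trans)
lemma st_trans2: "x \<in> PP \<Longrightarrow> y \<in> PP \<Longrightarrow> z \<in> PP \<Longrightarrow> le x y \<Longrightarrow> lt y z \<Longrightarrow> lt x z"
  unfolding strictly_def by (meson le_trans)

lemma real_above: assumes "x \<in> PP" "lt null_root x" shows "x \<in> RP"
proof -
  { fix n assume "n > 0" "x = (0, n)"
    then have "le x null_root" using imag_equiv by simp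
    then have False using assms(2) unfolding strictly_def by blast }
  then show ?thesis using PP_real_or_imag[OF assms(1)] by blast
qed

lemma real_below: assumes "x \<in> PP" "lt x null_root" shows "x \<in> RP"
proof -
  { fix n assume "n > 0" "x = (0, n)"
    then have "le null_root x" using imag_equiv by simp
    then have False using assms(2) unfolding strictly_def by blast }
  then show ?thesis using PP_real_or_imag[OF assms(1)] by blast
qed

lemma sp_PP: "sp \<rho> \<beta> \<gamma> \<Longrightarrow> \<beta> \<in> PP \<and> \<gamma> \<in> PP"
  unfolding split_pair_def by blast

lemma sp_finite: "finite {(\<beta>, \<gamma>). sp \<rho> \<beta> \<gamma>}"
proof -
  let ?f = "\<lambda>b::'a\<times>int. (b, (fst \<rho> - fst b, snd \<rho> - snd b))"
  have "{(\<beta>, \<gamma>). sp \<rho> \<beta> \<gamma>} \<subseteq> ?f ` ((insert 0 R) \<times> {0..snd \<rho>})"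
  proof
    fix p assume "p \<in> {(\<beta>, \<gamma>). sp \<rho> \<beta> \<gamma>}"
    then obtain \<beta> \<gamma> where p: "p = (\<beta>, \<gamma>)" and s: "sp \<rho> \<beta> \<gamma>" by blast
    have bP: "\<beta> \<in> PP" and gP: "\<gamma> \<in> PP" using sp_PP[OF s] by auto
    have sum: "fst \<beta> + fst \<gamma> = fst \<rho>" "snd \<beta> + snd \<gamma> = snd \<rho>"
      using s unfolding split_pair_def aff_add_def by auto
    have f: "fst \<beta> \<in> insert 0 R"
      using bP by (cases rule: PP_cases) (auto intro: pos_R negR)
    have "snd \<beta> \<ge> 0" "snd \<gamma> \<ge> 0" using PP_snd bP gP by auto
    then have "snd \<beta> \<in> {0..snd \<rho>}" using sum by auto
    then have "\<beta> \<in> (insert 0 R) \<times> {0..snd \<rho>}" using f by (simp add: mem_Times_iff)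
    moreover have "\<gamma> = (fst \<rho> - fst \<beta>, snd \<rho> - snd \<beta>)" using sum by (auto simp: algebra_simps prod_eq_iff)
    ultimately show "p \<in> ?f ` ((insert 0 R) \<times> {0..snd \<rho>})" using p by blast
  qed
  moreover have "finite (?f ` ((insert 0 R) \<times> {0..snd \<rho>}))" using finR by simp
  ultimately show ?thesis by (rule finite_subset)
qed

lemma prop_eq:
  assumes s: "sp \<rho> \<beta> \<gamma>" and s': "sp \<rho> \<beta>' \<gamma>'" and pb: "proportional \<beta> \<beta>'" and pg: "proportional \<gamma> \<gamma>'"
  shows "\<beta>' = \<beta> \<and> \<gamma>' = \<gamma>"
proof -
  obtain c where c: "c \<noteq> 0" "fst \<beta>' = c *\<^sub>R fst \<beta>" "real_of_int (snd \<beta>') = c * real_of_int (snd \<beta>)"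
    using pb unfolding proportional_def by blast
  obtain d where d: "d \<noteq> 0" "fst \<gamma>' = d *\<^sub>R fst \<gamma>" "real_of_int (snd \<gamma>') = d * real_of_int (snd \<gamma>)"
    using pg unfolding proportional_def by blast
  have e1: "fst \<beta> + fst \<gamma> = fst \<beta>' + fst \<gamma>'" and e2: "snd \<beta> + snd \<gamma> = snd \<beta>' + snd \<gamma>'"
    using s s' unfolding split_pair_def aff_add_def by (auto simp: prod_eq_iff)
  have e2r: "real_of_int (snd \<beta>) + real_of_int (snd \<gamma>) = real_of_int (snd \<beta>') + real_of_int (snd \<gamma>')"
    using e2 by (metis of_int_add)
  show ?thesis
  proof (cases "c = 1")
    case True
    then have f1: "fst \<beta>' = fst \<beta>" and f2: "snd \<beta>' = snd \<beta>" using c by auto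
    then have "\<beta>' = \<beta>" by (simp add: prod_eq_iff)
    moreover have "fst \<gamma>' = fst \<gamma>" using e1 f1 by simp
    moreover have "snd \<gamma>' = snd \<gamma>" using e2 f2 by simp
    ultimately show ?thesis by (simp add: prod_eq_iff)
  next
    case False
    define k where "k = (d - 1) / (1 - c)"
    have c1: "1 - c \<noteq> 0" using False by simp
    have v: "(1 - c) *\<^sub>R fst \<beta> = (d - 1) *\<^sub>R fst \<gamma>"
      using e1 c(2) d(2) by (simp add: algebra_simps)
    have "fst \<beta> = (1 / (1 - c)) *\<^sub>R ((1 - c) *\<^sub>R fst \<beta>)" using c1 by simp
    also have "\<dots> = k *\<^sub>R fst \<gamma>" unfolding v k_def by simp
    finally have fb: "fst \<beta> = k *\<^sub>R fst \<gamma>" .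
    have w: "(1 - c) * real_of_int (snd \<beta>) = (d - 1) * real_of_int (snd \<gamma>)"
      using e2r c(3) d(3) by (simp add: algebra_simps)
    have sb: "real_of_int (snd \<beta>) = k * real_of_int (snd \<gamma>)"
      using w c1 unfolding k_def by (simp add: field_simps)
    have bP: "\<beta> \<in> PP" and gP: "\<gamma> \<in> PP" using sp_PP[OF s] by auto
    have "k \<noteq> 0"
    proof
      assume "k = 0"
      then have "fst \<beta> = 0" "snd \<beta> = 0" using fb sb by auto
      then have "\<beta> = (0, 0)" by (simp add: prod_eq_iff)
      then show False using PP_nz[OF bP] by simp
    qed
    then have "proportional \<gamma> \<beta>" unfolding proportional_def using fb sb by blast
    then have "le \<beta> \<gamma>" using le_prop[OF gP bP] by blast
    moreover have "lt \<gamma> \<beta>" using s unfolding split_pair_def by blast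
    ultimately show ?thesis unfolding strictly_def by blast
  qed
qed

lemma minpair_gmax:
  assumes s: "sp \<rho> \<beta> \<gamma>" and g1: "\<forall>\<beta>' \<gamma>'. sp \<rho> \<beta>' \<gamma>' \<longrightarrow> le \<gamma>' \<gamma>"
    and g2: "\<forall>\<beta>' \<gamma>'. sp \<rho> \<beta>' \<gamma>' \<longrightarrow> le \<gamma> \<gamma>' \<longrightarrow> le \<beta> \<beta>'"
  shows "minimal_pair R S le \<rho> \<beta> \<gamma>"
  unfolding minimal_pair_def
proof (intro conjI s allI impI)
  fix \<beta>' \<gamma>' assume h: "sp \<rho> \<beta>' \<gamma>' \<and> (\<beta>', \<gamma>') \<noteq> (\<beta>, \<gamma>)"
  then have s': "sp \<rho> \<beta>' \<gamma>'" and ne: "(\<beta>', \<gamma>') \<noteq> (\<beta>, \<gamma>)" by auto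
  have bP: "\<beta> \<in> PP" "\<gamma> \<in> PP" "\<beta>' \<in> PP" "\<gamma>' \<in> PP" using sp_PP[OF s] sp_PP[OF s'] by auto
  have l1: "le \<gamma>' \<gamma>" using g1 s' by blast
  show "lt \<beta> \<beta>' \<or> lt \<gamma>' \<gamma>"
  proof (cases "le \<gamma> \<gamma>'")
    case False then show ?thesis using l1 unfolding strictly_def by blast
  next
    case True
    then have l2: "le \<beta> \<beta>'" using g2 s' by blast
    show ?thesis
    proof (cases "le \<beta>' \<beta>")
      case False then show ?thesis using l2 unfolding strictly_def by blast
    next
      case b: True
      have "proportional \<beta> \<beta>'" using le_prop[OF bP(1) bP(3)] l2 b by blast
      moreover have "proportional \<gamma> \<gamma>'" using le_prop[OF bP(2) bP(4)] l1 True by blast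
      ultimately have "\<beta>' = \<beta> \<and> \<gamma>' = \<gamma>" using prop_eq[OF s s'] by blast
      then show ?thesis using ne by simp
    qed
  qed
qed

lemma minpair_bmin:
  assumes s: "sp \<rho> \<beta> \<gamma>" and g1: "\<forall>\<beta>' \<gamma>'. sp \<rho> \<beta>' \<gamma>' \<longrightarrow> le \<beta> \<beta>'"
    and g2: "\<forall>\<beta>' \<gamma>'. sp \<rho> \<beta>' \<gamma>' \<longrightarrow> le \<beta>' \<beta> \<longrightarrow> le \<gamma>' \<gamma>"
  shows "minimal_pair R S le \<rho> \<beta> \<gamma>"
  unfolding minimal_pair_def
proof (intro conjI s allI impI)
  fix \<beta>' \<gamma>' assume h: "sp \<rho> \<beta>' \<gamma>' \<and> (\<beta>', \<gamma>') \<noteq> (\<beta>, \<gamma>)"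
  then have s': "sp \<rho> \<beta>' \<gamma>'" and ne: "(\<beta>', \<gamma>') \<noteq> (\<beta>, \<gamma>)" by auto
  have bP: "\<beta> \<in> PP" "\<gamma> \<in> PP" "\<beta>' \<in> PP" "\<gamma>' \<in> PP" using sp_PP[OF s] sp_PP[OF s'] by auto
  have l1: "le \<beta> \<beta>'" using g1 s' by blast
  show "lt \<beta> \<beta>' \<or> lt \<gamma>' \<gamma>"
  proof (cases "le \<beta>' \<beta>")
    case False then show ?thesis using l1 unfolding strictly_def by blast
  next
    case True
    then have l2: "le \<gamma>' \<gamma>" using g2 s' by blast
    show ?thesis
    proof (cases "le \<gamma> \<gamma>'")
      case False then show ?thesis using l2 unfolding strictly_def by blast
    next
      case g: True
      have "proportional \<beta> \<beta>'" using le_prop[OF bP(1) bP(3)] l1 True by blast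
      moreover have "proportional \<gamma> \<gamma>'" using le_prop[OF bP(2) bP(4)] l2 g by blast
      ultimately have "\<beta>' = \<beta> \<and> \<gamma>' = \<gamma>" using prop_eq[OF s s'] by blast
      then show ?thesis using ne by simp
    qed
  qed
qed

lemma select_gmax:
  assumes ne: "sp \<rho> \<beta>0 \<gamma>0"
  shows "\<exists>\<beta> \<gamma>. sp \<rho> \<beta> \<gamma> \<and> le \<gamma>0 \<gamma> \<and> minimal_pair R S le \<rho> \<beta> \<gamma>"
proof -
  define A where "A = {(\<beta>, \<gamma>). sp \<rho> \<beta> \<gamma>}"
  have fA: "finite A" unfolding A_def by (rule sp_finite)
  have AP: "fst p \<in> PP \<and> snd p \<in> PP" if p: "p \<in> A" for p
  proof -
    have "sp \<rho> (fst p) (snd p)" using p unfolding A_def by (cases p) simp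
    then show ?thesis by (rule sp_PP)
  qed
  have "(\<beta>0, \<gamma>0) \<in> A" using ne A_def by simp
  then have neA: "A \<noteq> {}" by blast
  have "\<exists>m\<in>A. \<forall>x\<in>A. le (snd x) (snd m)"
    by (rule finite_max[OF fA neA]) (use AP le_total le_trans in meson)+
  then obtain m1 where m1: "m1 \<in> A" "\<forall>x\<in>A. le (snd x) (snd m1)" by blast
  define T where "T = {p \<in> A. le (snd m1) (snd p)}"
  have fT: "finite T" using fA T_def by simp
  have "m1 \<in> T" using m1 AP le_refl T_def by blast
  then have neT: "T \<noteq> {}" by auto
  have TP: "\<And>p. p \<in> T \<Longrightarrow> fst p \<in> PP \<and> snd p \<in> PP" using AP T_def by blast
  have "\<exists>m\<in>T. \<forall>x\<in>T. le (fst m) (fst x)"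
    by (rule finite_max[OF fT neT, of "\<lambda>x y. le (fst y) (fst x)"]) (use TP le_total le_trans in meson)+
  then obtain m where m: "m \<in> T" "\<forall>x\<in>T. le (fst m) (fst x)" by blast
  obtain \<beta> \<gamma> where mp: "m = (\<beta>, \<gamma>)" by (cases m)
  have s: "sp \<rho> \<beta> \<gamma>" using m(1) mp T_def A_def by auto
  have mt: "le (snd m1) \<gamma>" using m(1) mp T_def by auto
  have gP: "\<gamma> \<in> PP" and m1P: "snd m1 \<in> PP" using sp_PP[OF s] AP[OF m1(1)] by auto
  have g1: "\<forall>\<beta>' \<gamma>'. sp \<rho> \<beta>' \<gamma>' \<longrightarrow> le \<gamma>' \<gamma>"
  proof (intro allI impI)
    fix \<beta>' \<gamma>' assume s': "sp \<rho> \<beta>' \<gamma>'"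
    then have "(\<beta>', \<gamma>') \<in> A" using A_def by simp
    then have "le \<gamma>' (snd m1)" using m1(2) by fastforce
    then show "le \<gamma>' \<gamma>" using le_trans[OF _ m1P gP _ mt] sp_PP[OF s'] by blast
  qed
  have g2: "\<forall>\<beta>' \<gamma>'. sp \<rho> \<beta>' \<gamma>' \<longrightarrow> le \<gamma> \<gamma>' \<longrightarrow> le \<beta> \<beta>'"
  proof (intro allI impI)
    fix \<beta>' \<gamma>' assume s': "sp \<rho> \<beta>' \<gamma>'" and l: "le \<gamma> \<gamma>'"
    then have A': "(\<beta>', \<gamma>') \<in> A" using A_def by simp
    have "le (snd m1) \<gamma>'" using le_trans[OF m1P gP _ mt l] sp_PP[OF s'] by blast
    then have "(\<beta>', \<gamma>') \<in> T" using A' T_def by simp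
    then show "le \<beta> \<beta>'" using m(2) mp by fastforce
  qed
  have "le \<gamma>0 \<gamma>" using g1 ne by blast
  then show ?thesis using s minpair_gmax[OF s g1 g2] by blast
qed

lemma select_bmin:
  assumes ne: "sp \<rho> \<beta>0 \<gamma>0"
  shows "\<exists>\<beta> \<gamma>. sp \<rho> \<beta> \<gamma> \<and> le \<beta> \<beta>0 \<and> minimal_pair R S le \<rho> \<beta> \<gamma>"
proof -
  define A where "A = {(\<beta>, \<gamma>). sp \<rho> \<beta> \<gamma>}"
  have fA: "finite A" unfolding A_def by (rule sp_finite)
  have AP: "fst p \<in> PP \<and> snd p \<in> PP" if p: "p \<in> A" for p
  proof -
    have "sp \<rho> (fst p) (snd p)" using p unfolding A_def by (cases p) simp
    then show ?thesis by (rule sp_PP)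
  qed
  have "(\<beta>0, \<gamma>0) \<in> A" using ne A_def by simp
  then have neA: "A \<noteq> {}" by blast
  have "\<exists>m\<in>A. \<forall>x\<in>A. le (fst m) (fst x)"
    by (rule finite_max[OF fA neA, of "\<lambda>x y. le (fst y) (fst x)"]) (use AP le_total le_trans in meson)+
  then obtain m1 where m1: "m1 \<in> A" "\<forall>x\<in>A. le (fst m1) (fst x)" by blast
  define T where "T = {p \<in> A. le (fst p) (fst m1)}"
  have fT: "finite T" using fA T_def by simp
  have "m1 \<in> T" using m1 AP le_refl T_def by blast
  then have neT: "T \<noteq> {}" by auto
  have TP: "\<And>p. p \<in> T \<Longrightarrow> fst p \<in> PP \<and> snd p \<in> PP" using AP T_def by blast
  have "\<exists>m\<in>T. \<forall>x\<in>T. le (snd x) (snd m)"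
    by (rule finite_max[OF fT neT]) (use TP le_total le_trans in meson)+
  then obtain m where m: "m \<in> T" "\<forall>x\<in>T. le (snd x) (snd m)" by blast
  obtain \<beta> \<gamma> where mp: "m = (\<beta>, \<gamma>)" by (cases m)
  have s: "sp \<rho> \<beta> \<gamma>" using m(1) mp T_def A_def by auto
  have mt: "le \<beta> (fst m1)" using m(1) mp T_def by auto
  have bP: "\<beta> \<in> PP" and m1P: "fst m1 \<in> PP" using sp_PP[OF s] AP[OF m1(1)] by auto
  have g1: "\<forall>\<beta>' \<gamma>'. sp \<rho> \<beta>' \<gamma>' \<longrightarrow> le \<beta> \<beta>'"
  proof (intro allI impI)
    fix \<beta>' \<gamma>' assume s': "sp \<rho> \<beta>' \<gamma>'"
    then have "(\<beta>', \<gamma>') \<in> A" using A_def by simp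
    then have "le (fst m1) \<beta>'" using m1(2) by fastforce
    then show "le \<beta> \<beta>'" using le_trans[OF bP m1P _ mt] sp_PP[OF s'] by blast
  qed
  have g2: "\<forall>\<beta>' \<gamma>'. sp \<rho> \<beta>' \<gamma>' \<longrightarrow> le \<beta>' \<beta> \<longrightarrow> le \<gamma>' \<gamma>"
  proof (intro allI impI)
    fix \<beta>' \<gamma>' assume s': "sp \<rho> \<beta>' \<gamma>'" and l: "le \<beta>' \<beta>"
    then have A': "(\<beta>', \<gamma>') \<in> A" using A_def by simp
    have "le \<beta>' (fst m1)" using le_trans[OF _ bP m1P l mt] sp_PP[OF s'] by blast
    then have "(\<beta>', \<gamma>') \<in> T" using A' T_def by simp
    then show "le \<gamma>' \<gamma>" using m(2) mp by fastforce
  qed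
  have "le \<beta> \<beta>0" using g1 ne by blast
  then show ?thesis using s minpair_bmin[OF s g1 g2] by blast
qed

lemma candidate:
  assumes x: "x \<in> PP" and y: "y \<in> PP" and sum: "aff_add x y = \<rho>" and np: "\<not> proportional x y"
  shows "sp \<rho> x y \<or> sp \<rho> y x"
proof -
  have sum': "aff_add y x = \<rho>" using sum unfolding aff_add_def by (simp add: add.commute)
  from le_total[OF x y] show ?thesis
  proof
    assume l: "le x y"
    then have "\<not> le y x" using np le_prop[OF x y] by blast
    then have "lt x y" using l unfolding strictly_def by blast
    then show ?thesis unfolding split_pair_def using x y sum' by blast
  next
    assume l: "le y x"
    then have "\<not> le x y" using np le_prop[OF x y] by blast
    then have "lt y x" using l unfolding strictly_def by blast
    then show ?thesis unfolding split_pair_def using x y sum by blast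
  qed
qed

lemma not_mult:
  assumes a1: "\<alpha>1 \<in> pos_roots R S" and a: "a \<in> S" and s: "\<alpha>1 + a \<in> R"
  shows "\<not> (\<exists>c. c \<noteq> 0 \<and> a = c *\<^sub>R \<alpha>1)"
proof
  assume "\<exists>c. c \<noteq> 0 \<and> a = c *\<^sub>R \<alpha>1"
  then obtain c where c: "c \<noteq> 0" "a = c *\<^sub>R \<alpha>1" by blast
  have aR: "a \<in> R" using a SR by auto
  have e: "\<alpha>1 = (1 / c) *\<^sub>R a" using c by simp
  then have "(1 / c) *\<^sub>R a \<in> R" using pos_R[OF a1] by simp
  then have "1 / c = 1 \<or> 1 / c = -1" by (rule redR[OF aR])
  then have "\<alpha>1 = a \<or> \<alpha>1 = - a" using \<open>\<alpha>1 = (1 / c) *\<^sub>R a\<close> by auto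
  then show False
  proof
    assume "\<alpha>1 = a"
    then have "2 *\<^sub>R a \<in> R" using s by (simp add: scaleR_2)
    then have "(2::real) = 1 \<or> (2::real) = -1" by (rule redR[OF aR])
    then show False by simp
  next
    assume "\<alpha>1 = - a"
    then show False using a1 pos_not_neg[OF S_pos[OF a]] by simp
  qed
qed


lemma no_imag_part:
  assumes al: "\<alpha> \<in> pos_roots R S" and y: "y \<in> PP" and f: "fst y = - \<alpha>" and sn: "snd y \<le> 0"
  shows False
  using y
proof (cases rule: PP_cases)
  case (A \<beta> m)
  then have "- \<alpha> \<in> pos_roots R S" using f by simp
  then show False using pos_not_neg[OF al] by simp
next
  case (B \<beta> m)
  then show False using sn by simp
next
  case (I m)
  then show False using sn by simp
qed

lemma sp_real_B1:
  assumes al: "\<alpha> \<in> pos_roots R S" and s: "sp (- \<alpha>, 1) \<beta> \<gamma>"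
  shows "\<beta> \<in> RP \<and> \<gamma> \<in> RP"
proof -
  have bP: "\<beta> \<in> PP" and gP: "\<gamma> \<in> PP" using sp_PP[OF s] by auto
  have e1: "fst \<beta> + fst \<gamma> = - \<alpha>" and e2: "snd \<beta> + snd \<gamma> = 1"
    using s unfolding split_pair_def aff_add_def by (auto simp: prod_eq_iff)
  have nb: "snd \<beta> \<ge> 0" and ng: "snd \<gamma> \<ge> 0" using PP_snd bP gP by auto
  have "\<beta> \<in> RP"
  proof -
    { fix k assume k: "k > 0" "\<beta> = (0, k)"
      then have "fst \<gamma> = - \<alpha>" "snd \<gamma> \<le> 0" using e1 e2 by auto
      then have False using no_imag_part[OF al gP] by blast }
    then show ?thesis using PP_real_or_imag[OF bP] by blast
  qed
  moreover have "\<gamma> \<in> RP"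
  proof -
    { fix k assume k: "k > 0" "\<gamma> = (0, k)"
      then have "fst \<beta> = - \<alpha>" "snd \<beta> \<le> 0" using e1 e2 by auto
      then have False using no_imag_part[OF al bP] by blast }
    then show ?thesis using PP_real_or_imag[OF gP] by blast
  qed
  ultimately show ?thesis by blast
qed

lemma main:
  assumes irr: "irreducible_rs R" and rho: "\<rho> \<in> RP" and ns: "\<rho> \<notin> aff_simple_roots R S"
    and h8: "\<not> (\<exists>a\<in>S. \<exists>n::int. n > 0 \<and> (\<rho> = (a, n) \<or> \<rho> = (- a, n)))"
  shows "\<exists>\<beta> \<gamma>. minimal_pair R S le \<rho> \<beta> \<gamma> \<and> \<beta> \<in> RP \<and> \<gamma> \<in> RP"
  using rho
proof (cases rule: RP_cases)
  case (A \<alpha> n)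
  have "\<alpha> \<notin> S"
  proof
    assume aS: "\<alpha> \<in> S"
    show False
    proof (cases "n = 0")
      case True
      then have "\<rho> \<in> aff_simple_roots R S" using A aS unfolding aff_simple_roots_def by blast
      then show False using ns by blast
    next
      case False
      then have "n > 0" using A(2) by simp
      then show False using h8 aS A(3) by blast
    qed
  qed
  then obtain a where a: "a \<in> S" and a1: "\<alpha> - a \<in> pos_roots R S" using L1[OF A(1)] by blast
  define x where "x = (\<alpha> - a, n)"
  define y where "y = (a, (0::int))"
  have xR: "x \<in> RP" using rp1[OF a1 A(2)] x_def by simp
  have yR: "y \<in> RP" using rp1[OF S_pos[OF a], of 0] y_def by simp
  have sum: "aff_add x y = \<rho>" using A(3) unfolding x_def y_def aff_add_def by simp
  have np: "\<not> proportional x y"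
  proof
    assume "proportional x y"
    then obtain c where "c \<noteq> 0" "fst y = c *\<^sub>R fst x" unfolding proportional_def by blast
    then have "\<exists>c. c \<noteq> 0 \<and> a = c *\<^sub>R (\<alpha> - a)" using x_def y_def by auto
    moreover have "(\<alpha> - a) + a \<in> R" using A(1) pos_R by simp
    ultimately show False using not_mult[OF a1 a] by blast
  qed
  have ax: "lt null_root x" using above[OF a1 A(2)] x_def by simp
  have ay: "lt null_root y" using above[OF S_pos[OF a], of 0] y_def by simp
  from candidate[OF RP_PP[OF xR] RP_PP[OF yR] sum np]
  obtain \<beta>0 \<gamma>0 where s0: "sp \<rho> \<beta>0 \<gamma>0" and g0: "lt null_root \<gamma>0" using ax ay by blast
  from select_gmax[OF s0] obtain \<beta> \<gamma> where s: "sp \<rho> \<beta> \<gamma>" and l: "le \<gamma>0 \<gamma>"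
    and mp: "minimal_pair R S le \<rho> \<beta> \<gamma>" by blast
  have bP: "\<beta> \<in> PP" "\<gamma> \<in> PP" using sp_PP[OF s] by auto
  have g0P: "\<gamma>0 \<in> PP" using sp_PP[OF s0] by auto
  have lg: "lt null_root \<gamma>" using st_trans1[OF delta_PP g0P bP(2) g0 l] .
  have "le \<gamma> \<beta>" using s unfolding split_pair_def strictly_def by blast
  then have lb: "lt null_root \<beta>" using st_trans1[OF delta_PP bP(2) bP(1) lg] by blast
  have "\<beta> \<in> RP" "\<gamma> \<in> RP" using real_above bP lg lb by auto
  then show ?thesis using mp by blast
next
  case (B \<alpha> n)
  show ?thesis
  proof (cases "n = 1")
    case True
    have ex: "\<exists>a\<in>S. \<alpha> + a \<in> R"
    proof (rule ccontr)
      assume "\<not> (\<exists>a\<in>S. \<alpha> + a \<in> R)"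
      then have "\<forall>a\<in>S. \<alpha> + a \<notin> R" by blast
      then have "highest_root R S = \<alpha>" using highest[OF irr B(1)] by blast
      then have "\<rho> \<in> aff_simple_roots R S" using B(3) True unfolding aff_simple_roots_def by simp
      then show False using ns by blast
    qed
    then obtain a where a: "a \<in> S" "\<alpha> + a \<in> R" by blast
    have "\<forall>x\<in>S. cf (\<alpha> + a) x \<ge> 0"
    proof
      fix x assume x: "x \<in> S"
      have "cf \<alpha> x \<ge> 0" using B(1) x pos_iff by auto
      moreover have "cf a x \<ge> 0" using S_pos[OF a(1)] x pos_iff by auto
      ultimately show "cf (\<alpha> + a) x \<ge> 0" by (simp add: cf_add)
    qed
    then have ap: "\<alpha> + a \<in> pos_roots R S" using a(2) pos_iff by blast
    define x where "x = (a, (0::int))"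
    define y where "y = (- (\<alpha> + a), (1::int))"
    have xR: "x \<in> RP" using rp1[OF S_pos[OF a(1)], of 0] x_def by simp
    have yR: "y \<in> RP" using rp2[OF ap, of 1] y_def by simp
    have sum: "aff_add x y = \<rho>" using B(3) True unfolding x_def y_def aff_add_def by simp
    have np: "\<not> proportional x y"
    proof
      assume "proportional x y"
      then obtain c where "real_of_int (snd y) = c * real_of_int (snd x)" unfolding proportional_def by blast
      then show False using x_def y_def by simp
    qed
    from candidate[OF RP_PP[OF xR] RP_PP[OF yR] sum np]
    obtain \<beta>0 \<gamma>0 where s0: "sp \<rho> \<beta>0 \<gamma>0" by blast
    from select_gmax[OF s0] obtain \<beta> \<gamma> where s: "sp \<rho> \<beta> \<gamma>"
      and mp: "minimal_pair R S le \<rho> \<beta> \<gamma>" by blast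
    have "sp (- \<alpha>, 1) \<beta> \<gamma>" using s B(3) True by simp
    then have "\<beta> \<in> RP \<and> \<gamma> \<in> RP" using sp_real_B1[OF B(1)] by blast
    then show ?thesis using mp by blast
  next
    case False
    then have n2: "n \<ge> 2" using B(2) by simp
    have "\<alpha> \<notin> S" using h8 B(2) B(3) by blast
    then obtain a where a: "a \<in> S" and a1: "\<alpha> - a \<in> pos_roots R S" using L1[OF B(1)] by blast
    define x where "x = (- (\<alpha> - a), n - 1)"
    define y where "y = (- a, (1::int))"
    have xR: "x \<in> RP" using rp2[OF a1, of "n - 1"] n2 x_def by simp
    have yR: "y \<in> RP" using rp2[OF S_pos[OF a], of 1] y_def by simp
    have sum: "aff_add x y = \<rho>" using B(3) unfolding x_def y_def aff_add_def by simp
    have np: "\<not> proportional x y"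
    proof
      assume "proportional x y"
      then obtain c where c: "c \<noteq> 0" "fst y = c *\<^sub>R fst x" unfolding proportional_def by blast
      then have "- a = - (c *\<^sub>R (\<alpha> - a))" using x_def y_def by (simp add: algebra_simps)
      then have "a = c *\<^sub>R (\<alpha> - a)" by simp
      then have "\<exists>c. c \<noteq> 0 \<and> a = c *\<^sub>R (\<alpha> - a)" using c(1) by blast
      moreover have "(\<alpha> - a) + a \<in> R" using B(1) pos_R by simp
      ultimately show False using not_mult[OF a1 a] by blast
    qed
    have bx: "lt x null_root" using below[OF a1, of "n - 1"] n2 x_def by simp
    have "(1::int) > 0" by simp
    then have by': "lt y null_root" using below[OF S_pos[OF a]] y_def by blast
    from candidate[OF RP_PP[OF xR] RP_PP[OF yR] sum np]
    obtain \<beta>0 \<gamma>0 where s0: "sp \<rho> \<beta>0 \<gamma>0" and b0: "lt \<beta>0 null_root" using bx by' by blast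
    from select_bmin[OF s0] obtain \<beta> \<gamma> where s: "sp \<rho> \<beta> \<gamma>" and l: "le \<beta> \<beta>0"
      and mp: "minimal_pair R S le \<rho> \<beta> \<gamma>" by blast
    have bP: "\<beta> \<in> PP" "\<gamma> \<in> PP" using sp_PP[OF s] by auto
    have b0P: "\<beta>0 \<in> PP" using sp_PP[OF s0] by auto
    have lb: "lt \<beta> null_root" using st_trans2[OF bP(1) b0P delta_PP l b0] .
    have "le \<gamma> \<beta>" using s unfolding split_pair_def strictly_def by blast
    then have lg: "lt \<gamma> null_root" using st_trans2[OF bP(2) bP(1) delta_PP _ lb] by blast
    have "\<beta> \<in> RP" "\<gamma> \<in> RP" using real_below bP lg lb by auto
    then show ?thesis using mp by blast
  qed
qed


end

theorem lemma6p9: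
  fixes R S :: "'a::euclidean_space set"
    and le :: "'a \<times> int \<Rightarrow> 'a \<times> int \<Rightarrow> bool"
    and \<rho> :: "'a \<times> int"
  assumes "root_system R" and "irreducible_rs R" and "is_base R S"
    and "convex_preorder R S le" and "balanced R S le"
    and "\<rho> \<in> real_pos_roots R S" and "\<rho> \<notin> aff_simple_roots R S"
    and "\<not> (\<exists>a\<in>S. \<exists>n::int. n > 0 \<and> (\<rho> = (a, n) \<or> \<rho> = (- a, n)))"
  shows "\<exists>\<beta> \<gamma>. minimal_pair R S le \<rho> \<beta> \<gamma> \<and> \<beta> \<in> real_pos_roots R S \<and> \<gamma> \<in> real_pos_roots R S"
proof -
  interpret aff R S le
    by (rule aff.intro[OF rootsys.intro[OF assms(1) assms(3)] aff_axioms.intro[OF assms(4) assms(5)]])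
  show ?thesis using main[OF assms(2) assms(6) assms(7) assms(8)] .
qed

end
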